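(* Let $n\ge 3$ and let $C\in\mathbb{R}^{n\times n}$ be nonnegative, doubly stochastic, irreducible, with zero diagonal entries. Let $x(s)$ evolve by the Modified DeGroot-Friedkin model $x(s+1)=C^\top x(s)+X(s)x(s)-C^\top X(s)x(s)$, $X(s)=\mathrm{diag}(x(s))$, with $x(0)\in\Delta$. Let $x(s)_{\max}=\max_i x_i(s)$. If for some $s$ we have $x(s)>0$ (all entries positive) and $x(s)\ne\tfrac1n\mathbf 1$, then $x(s+n-1)_{\max}<x(s)_{\max}$.
   Context: $\Delta=\{x\in\mathbb{R}^n: x\ge 0,\ \sum_i x_i=1\}$; $\mathbf 1$ is the all-ones vector. *)

theory Defs
  imports "HOL-Analysis.Analysis"
begin

definition std_simplex :: "(real ^ 'n) set" where
  "std_simplex = {x. (\<forall>i. x $ i \<ge> 0) \<and> (\<Sum>i\<in>UNIV. x $ i) = 1}"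

definition diag_mat :: "real ^ 'n \<Rightarrow> real ^ 'n ^ 'n" where
  "diag_mat v = (\<chi> i j. if i = j then v $ i else 0)"

definition nonneg_mat :: "real ^ 'n ^ 'n \<Rightarrow> bool" where
  "nonneg_mat C \<longleftrightarrow> (\<forall>i j. C $ i $ j \<ge> 0)"

definition doubly_stochastic :: "real ^ 'n ^ 'n \<Rightarrow> bool" where
  "doubly_stochastic C \<longleftrightarrow> nonneg_mat C \<and>
     (\<forall>i. (\<Sum>j\<in>UNIV. C $ i $ j) = 1) \<and> (\<forall>j. (\<Sum>i\<in>UNIV. C $ i $ j) = 1)"

text \<open>Irreducible: there is no simultaneous row/column permutation bringing C to
  block triangular form, i.e. no nonempty proper index set S with C i j = 0 for
  all i in S and j outside S.\<close>
definition irreducible_mat :: "real ^ 'n ^ 'n \<Rightarrow> bool" where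
  "irreducible_mat C \<longleftrightarrow>
     \<not> (\<exists>S. S \<noteq> {} \<and> S \<noteq> UNIV \<and> (\<forall>i\<in>S. \<forall>j. j \<notin> S \<longrightarrow> C $ i $ j = 0))"

definition mdf_step :: "real ^ 'n ^ 'n \<Rightarrow> real ^ 'n \<Rightarrow> real ^ 'n" where
  "mdf_step C x = transpose C *v x + diag_mat x *v x - (transpose C ** diag_mat x) *v x"

definition vmax :: "real ^ 'n \<Rightarrow> real" where
  "vmax x = Max (range (\<lambda>i. x $ i))"

end

theory Submission
  imports Defs
begin

lemma mdf_comp: "mdf_step C y $ i = (y$i)^2 + (\<Sum>j\<in>UNIV. C$j$i * (y$j - (y$j)^2))"
proof -
  have a: "\<And>j. (\<Sum>n\<in>UNIV. y $ j * (C $ n $ i * (if n = j then y $ n else 0))) = y$j * (y$j * C$j$i)"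
  proof -
    fix j
    have "(\<Sum>n\<in>UNIV. y $ j * (C $ n $ i * (if n = j then y $ n else 0))) = (\<Sum>n\<in>UNIV. if n = j then y $ j * (C $ n $ i * y $ n) else 0)"
      by (rule sum.cong) auto
    also have "\<dots> = y$j * (y$j * C$j$i)" by simp
    finally show "(\<Sum>n\<in>UNIV. y $ j * (C $ n $ i * (if n = j then y $ n else 0))) = y$j * (y$j * C$j$i)" .
  qed
  have b: "(\<Sum>j\<in>UNIV. y $ j * (if i = j then y $ i else 0)) = y$i*y$i"
  proof -
    have "(\<Sum>j\<in>UNIV. y $ j * (if i = j then y $ i else 0)) = (\<Sum>j\<in>UNIV. if i = j then y $ j * y $ i else 0)"
      by (rule sum.cong) auto
    also have "\<dots> = y$i*y$i" by simp
    finally show ?thesis .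
  qed
  show ?thesis
  unfolding mdf_step_def diag_mat_def
  by (simp add: matrix_vector_mult_def matrix_matrix_mult_def transpose_def sum_subtractf
      sum_distrib_left power2_eq_square algebra_simps a b)
qed

lemma vmax_ge: "y $ i \<le> vmax y"
  unfolding vmax_def by (rule Max_ge) auto

lemma vmax_in: "\<exists>i. y $ i = vmax y"
proof -
  have "Max (range (\<lambda>i. y $ i)) \<in> range (\<lambda>i. y $ i)" by (rule Max_in) auto
  then obtain i where "Max (range (\<lambda>i. y $ i)) = y $ i" by blast
  then show ?thesis unfolding vmax_def by (intro exI[of _ i]) simp
qed

lemma simp_nn: "y \<in> std_simplex \<Longrightarrow> y $ i \<ge> 0"
  unfolding std_simplex_def by auto

lemma simp_sum: "y \<in> std_simplex \<Longrightarrow> (\<Sum>i\<in>UNIV. y $ i) = 1"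
  unfolding std_simplex_def by auto

lemma simp_le1: assumes "y \<in> std_simplex" shows "y $ i \<le> 1"
proof -
  have "y $ i \<le> (\<Sum>i\<in>UNIV. y $ i)"
    by (rule member_le_sum) (auto simp: simp_nn[OF assms])
  then show ?thesis using simp_sum[OF assms] by simp
qed

lemma simp_pair: assumes "y \<in> std_simplex" "j \<noteq> k" shows "y $ j + y $ k \<le> 1"
proof -
  have "(\<Sum>i\<in>{j,k}. y $ i) \<le> (\<Sum>i\<in>UNIV. y $ i)"
    by (rule sum_mono2) (auto simp: simp_nn[OF assms(1)])
  then show ?thesis using simp_sum[OF assms(1)] assms(2) by simp
qed

lemma simp_triple: assumes "y \<in> std_simplex" "j \<noteq> k" "l \<noteq> j" "l \<noteq> k"
  shows "y $ j + y $ k + y $ l \<le> 1"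
proof -
  have "(\<Sum>i\<in>{j,k,l}. y $ i) \<le> (\<Sum>i\<in>UNIV. y $ i)"
    by (rule sum_mono2) (auto simp: simp_nn[OF assms(1)])
  then show ?thesis using simp_sum[OF assms(1)] assms(2-4) by simp
qed

lemma step_simplex:
  assumes ds: "doubly_stochastic C" and y: "y \<in> std_simplex"
  shows "mdf_step C y \<in> std_simplex"
proof -
  have nnC: "\<And>i j. C $ i $ j \<ge> 0" using ds unfolding doubly_stochastic_def nonneg_mat_def by auto
  have rs: "\<And>j. (\<Sum>i\<in>UNIV. C $ j $ i) = 1" using ds unfolding doubly_stochastic_def by auto
  have g: "\<And>j. y $ j - (y $ j)^2 \<ge> 0"
  proof -
    fix j
    have "y $ j * (1 - y $ j) \<ge> 0" using simp_nn[OF y] simp_le1[OF y] by simp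
    then show "y $ j - (y $ j)^2 \<ge> 0" by (simp add: power2_eq_square algebra_simps)
  qed
  have nn: "\<And>i. mdf_step C y $ i \<ge> 0"
    unfolding mdf_comp by (intro add_nonneg_nonneg sum_nonneg mult_nonneg_nonneg zero_le_power2 nnC g)
  have "(\<Sum>i\<in>UNIV. mdf_step C y $ i) = (\<Sum>i\<in>UNIV. (y$i)^2) + (\<Sum>i\<in>UNIV. \<Sum>j\<in>UNIV. C$j$i * (y$j - (y$j)^2))"
    unfolding mdf_comp by (simp add: sum.distrib)
  also have "(\<Sum>i\<in>UNIV. \<Sum>j\<in>UNIV. C$j$i * (y$j - (y$j)^2)) = (\<Sum>j\<in>UNIV. \<Sum>i\<in>UNIV. C$j$i * (y$j - (y$j)^2))"
    by (rule sum.swap)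
  also have "\<dots> = (\<Sum>j\<in>UNIV. (y$j - (y$j)^2))"
    by (simp add: sum_distrib_right[symmetric] rs)
  finally have "(\<Sum>i\<in>UNIV. mdf_step C y $ i) = (\<Sum>i\<in>UNIV. y $ i)"
    by (simp add: sum_subtractf)
  then show ?thesis using nn simp_sum[OF y] unfolding std_simplex_def by auto
qed

lemma step_pos:
  assumes ds: "doubly_stochastic C" and y: "y \<in> std_simplex" and p: "\<forall>i. y $ i > 0"
  shows "mdf_step C y $ i > 0"
proof -
  have nnC: "\<And>i j. C $ i $ j \<ge> 0" using ds unfolding doubly_stochastic_def nonneg_mat_def by auto
  have g: "\<And>j. y $ j - (y $ j)^2 \<ge> 0"
  proof -
    fix j
    have "y $ j * (1 - y $ j) \<ge> 0" using simp_nn[OF y] simp_le1[OF y] by simp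
    then show "y $ j - (y $ j)^2 \<ge> 0" by (simp add: power2_eq_square algebra_simps)
  qed
  have "(\<Sum>j\<in>UNIV. C$j$i * (y$j - (y$j)^2)) \<ge> 0"
    by (intro sum_nonneg mult_nonneg_nonneg nnC g)
  moreover have "(y$i)^2 > 0" using p[rule_format, of i] by simp
  ultimately show ?thesis unfolding mdf_comp by linarith
qed

lemma f_bound:
  assumes y: "y \<in> std_simplex"
  shows "y $ j - (y $ j)^2 \<le> vmax y - (vmax y)^2"
proof -
  let ?M = "vmax y"
  obtain k where k: "y $ k = ?M" using vmax_in by blast
  have jm: "y $ j \<le> ?M" by (rule vmax_ge)
  show ?thesis
  proof (cases "y $ j \<le> 1 - ?M")
    case True
    have "(?M - y $ j) * (1 - ?M - y $ j) \<ge> 0" using True jm by simp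
    then show ?thesis by (simp add: power2_eq_square algebra_simps)
  next
    case False
    have "j = k"
    proof (rule ccontr)
      assume "j \<noteq> k"
      then have "y $ j + y $ k \<le> 1" by (rule simp_pair[OF y])
      then show False using False k by simp
    qed
    then show ?thesis using k by simp
  qed
qed

lemma step_max:
  assumes ds: "doubly_stochastic C" and y: "y \<in> std_simplex"
  shows "vmax (mdf_step C y) \<le> vmax y"
proof -
  let ?M = "vmax y"
  have nnC: "\<And>i j. C $ i $ j \<ge> 0" using ds unfolding doubly_stochastic_def nonneg_mat_def by auto
  have cs: "\<And>i. (\<Sum>j\<in>UNIV. C $ j $ i) = 1" using ds unfolding doubly_stochastic_def by auto
  have "\<And>i. mdf_step C y $ i \<le> ?M"
  proof -
    fix i
    have "(\<Sum>j\<in>UNIV. C$j$i * (y$j - (y$j)^2)) \<le> (\<Sum>j\<in>UNIV. C$j$i * (?M - ?M^2))"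
      by (intro sum_mono mult_left_mono f_bound[OF y]) (auto simp: nnC)
    also have "\<dots> = ?M - ?M^2" by (simp add: sum_distrib_right[symmetric] cs)
    finally have a: "(\<Sum>j\<in>UNIV. C$j$i * (y$j - (y$j)^2)) \<le> ?M - ?M^2" .
    have "(y$i)^2 \<le> ?M^2"
      using simp_nn[OF y, of i] vmax_ge[of y i] by (intro power_mono) auto
    with a show "mdf_step C y $ i \<le> ?M" unfolding mdf_comp by linarith
  qed
  moreover obtain i where "mdf_step C y $ i = vmax (mdf_step C y)" using vmax_in by blast
  ultimately show ?thesis by metis
qed

lemma step_eq:
  fixes C :: "real ^ 'n ^ 'n"
  assumes ds: "doubly_stochastic C" and y: "y \<in> std_simplex" and p: "\<forall>i. y $ i > 0"
    and n3: "CARD('n) \<ge> 3"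
    and eq: "mdf_step C y $ i = vmax y"
  shows "y $ i = vmax y \<and> (\<forall>j. C $ j $ i > 0 \<longrightarrow> y $ j = vmax y)"
proof -
  let ?M = "vmax y"
  let ?G = "?M - ?M^2"
  have nnC: "\<And>i j. C $ i $ j \<ge> 0" using ds unfolding doubly_stochastic_def nonneg_mat_def by auto
  have cs: "\<And>i. (\<Sum>j\<in>UNIV. C $ j $ i) = 1" using ds unfolding doubly_stochastic_def by auto
  have "(\<Sum>j\<in>UNIV. C$j$i * (y$j - (y$j)^2)) \<le> (\<Sum>j\<in>UNIV. C$j$i * ?G)"
    by (intro sum_mono mult_left_mono f_bound[OF y]) (auto simp: nnC)
  also have "\<dots> = ?G" by (simp add: sum_distrib_right[symmetric] cs)
  finally have a: "(\<Sum>j\<in>UNIV. C$j$i * (y$j - (y$j)^2)) \<le> ?G" .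
  have b: "(y$i)^2 \<le> ?M^2"
    using simp_nn[OF y, of i] vmax_ge[of y i] by (intro power_mono) auto
  have e1: "(y$i)^2 = ?M^2" and e2: "(\<Sum>j\<in>UNIV. C$j$i * (y$j - (y$j)^2)) = ?G"
    using a b eq unfolding mdf_comp by linarith+
  have M0: "?M \<ge> 0" using simp_nn[OF y, of i] vmax_ge[of y i] by linarith
  have yi: "y $ i = ?M" using e1 M0 simp_nn[OF y, of i] by (simp add: power2_eq_iff_nonneg)
  have "(\<Sum>j\<in>UNIV. C$j$i * (?G - (y$j - (y$j)^2))) = 0"
    using e2 by (simp add: right_diff_distrib sum_subtractf sum_distrib_right[symmetric] cs)
  moreover have "\<forall>j\<in>UNIV. C$j$i * (?G - (y$j - (y$j)^2)) \<ge> 0"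
    using f_bound[OF y] nnC by (auto intro: mult_nonneg_nonneg)
  moreover have "((\<Sum>j\<in>UNIV. C$j$i * (?G - (y$j - (y$j)^2))) = 0) = (\<forall>j\<in>UNIV. C$j$i * (?G - (y$j - (y$j)^2)) = 0)"
    by (rule sum_nonneg_eq_0_iff) (use f_bound[OF y] nnC in \<open>auto intro: mult_nonneg_nonneg\<close>)
  ultimately have z: "\<forall>j\<in>UNIV. C$j$i * (?G - (y$j - (y$j)^2)) = 0"
    by blast
  have "\<forall>j. C $ j $ i > 0 \<longrightarrow> y $ j = ?M"
  proof (intro allI impI)
    fix j assume cp: "C $ j $ i > 0"
    have "C$j$i * (?G - (y$j - (y$j)^2)) = 0" using z by blast
    then have "?G - (y$j - (y$j)^2) = 0" using cp by simp
    then have "(?M - y $ j) * (1 - ?M - y $ j) = 0" by (simp add: power2_eq_square algebra_simps)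
    then have "y $ j = ?M \<or> y $ j = 1 - ?M" by auto
    then show "y $ j = ?M"
    proof
      assume j1: "y $ j = 1 - ?M"
      show ?thesis
      proof (rule ccontr)
        assume ne: "y $ j \<noteq> ?M"
        obtain k where k: "y $ k = ?M" using vmax_in by blast
        have jk: "j \<noteq> k" using ne k by auto
        have "\<exists>l. l \<noteq> j \<and> l \<noteq> k"
        proof (rule ccontr)
          assume "\<not> (\<exists>l. l \<noteq> j \<and> l \<noteq> k)"
          then have "(UNIV :: 'n set) \<subseteq> {j, k}" by auto
          then have "CARD('n) \<le> card {j,k}" by (intro card_mono) auto
          also have "\<dots> \<le> 2" by (simp add: card_insert_if)
          finally show False using n3 by simp
        qed
        then obtain l where l: "l \<noteq> j" "l \<noteq> k" by blast
        have "y $ j + y $ k + y $ l \<le> 1" by (rule simp_triple[OF y jk l])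
        then show False using p j1 k by (metis add.commute add_diff_cancel_left' add_le_same_cancel2 diff_add_cancel not_less)
      qed
    qed
  qed
  with yi show ?thesis by blast
qed

theorem lemma5:
  fixes C :: "real ^ 'n ^ 'n" and x :: "nat \<Rightarrow> real ^ 'n" and s :: nat
  assumes "CARD('n) \<ge> 3"
    and "nonneg_mat C" and "doubly_stochastic C" and "irreducible_mat C"
    and "\<forall>i. C $ i $ i = 0"
    and "\<forall>t. x (Suc t) = mdf_step C (x t)"
    and "x 0 \<in> std_simplex"
    and "\<forall>i. x s $ i > 0"
    and "x s \<noteq> (\<chi> i. 1 / real CARD('n))"
  shows "vmax (x (s + CARD('n) - 1)) < vmax (x s)"
proof -
  note n3 = assms(1) and ds = assms(3) and irr = assms(4) and st = assms(6)
  have nnC: "\<And>i j. C $ i $ j \<ge> 0" using ds unfolding doubly_stochastic_def nonneg_mat_def by auto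
  have sx: "\<And>t. x t \<in> std_simplex"
  proof -
    fix t show "x t \<in> std_simplex"
    proof (induction t)
      case 0 show ?case by (rule assms(7))
    next
      case (Suc t) show ?case unfolding st[rule_format] by (rule step_simplex[OF ds Suc])
    qed
  qed
  have px: "\<And>t. \<forall>i. x (s + t) $ i > 0"
  proof -
    fix t show "\<forall>i. x (s + t) $ i > 0"
    proof (induction t)
      case 0 show ?case using assms(8) by simp
    next
      case (Suc t)
      have "x (s + Suc t) = mdf_step C (x (s + t))" using st by simp
      then show ?case using step_pos[OF ds sx Suc] by simp
    qed
  qed
  define M where "M = vmax (x s)"
  have le: "\<And>t. vmax (x (s + t)) \<le> M"
  proof -
    fix t show "vmax (x (s + t)) \<le> M"
    proof (induction t)
      case 0 then show ?case by (simp add: M_def)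
    next
      case (Suc t)
      have "vmax (x (s + Suc t)) \<le> vmax (x (s + t))"
        using step_max[OF ds sx[of "s+t"]] st by simp
      then show ?case using Suc by linarith
    qed
  qed
  define S where "S t = {i. x (s + t) $ i = M}" for t
  have key: "vmax (x (s + t)) = M \<longrightarrow> card (S t) + t \<le> CARD('n) - 1" for t
  proof (induction t)
    case 0
    have "S 0 \<noteq> UNIV"
    proof
      assume a: "S 0 = UNIV"
      then have xm: "\<And>i. x s $ i = M" unfolding S_def by auto
      have "(\<Sum>i\<in>UNIV. x s $ i) = 1" by (rule simp_sum[OF sx])
      then have "real CARD('n) * M = 1" using xm by simp
      then have "M = 1 / real CARD('n)" by (simp add: field_simps)
      then have "x s = (\<chi> i. 1 / real CARD('n))" using xm by (simp add: vec_eq_iff)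
      then show False using assms(9) by simp
    qed
    then have "card (S 0) < CARD('n)" by (intro psubset_card_mono) auto
    then have "card (S 0) \<le> CARD('n) - 1" by presburger
    then show ?case by simp
  next
    case (Suc t)
    show ?case
    proof
      assume v1: "vmax (x (s + Suc t)) = M"
      have xs: "x (s + Suc t) = mdf_step C (x (s + t))" using st by simp
      have "vmax (x (s + t)) \<ge> M" using step_max[OF ds sx[of "s+t"]] xs v1 by simp
      then have v0: "vmax (x (s + t)) = M" using le[of t] by linarith
      then have ih: "card (S t) + t \<le> CARD('n) - 1" using Suc by blast
      have cl: "\<And>i. i \<in> S (Suc t) \<Longrightarrow> i \<in> S t \<and> (\<forall>j. C $ j $ i > 0 \<longrightarrow> j \<in> S t)"
      proof -
        fix i assume "i \<in> S (Suc t)"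
        then have "mdf_step C (x (s + t)) $ i = vmax (x (s + t))" using xs v0 unfolding S_def by simp
        from step_eq[OF ds sx px n3 this] show "i \<in> S t \<and> (\<forall>j. C $ j $ i > 0 \<longrightarrow> j \<in> S t)"
          using v0 unfolding S_def by simp
      qed
      then have sub: "S (Suc t) \<subseteq> S t" by blast
      obtain i0 where "x (s + Suc t) $ i0 = vmax (x (s + Suc t))" using vmax_in by blast
      then have i0: "i0 \<in> S (Suc t)" using v1 unfolding S_def by simp
      have ne: "S (Suc t) \<noteq> S t"
      proof
        assume eqS: "S (Suc t) = S t"
        let ?T = "- S t"
        have "S t \<noteq> UNIV"
        proof
          assume "S t = UNIV"
          then have "card (S t) = CARD('n)" by simp
          then show False using ih n3 by linarith
        qed
        then have T1: "?T \<noteq> {}" by auto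
        have T2: "?T \<noteq> UNIV" using i0 eqS by auto
        have nall: "\<not> (\<forall>i\<in>?T. \<forall>j. j \<notin> ?T \<longrightarrow> C $ i $ j = 0)"
        proof
          assume h: "\<forall>i\<in>?T. \<forall>j. j \<notin> ?T \<longrightarrow> C $ i $ j = 0"
          have "\<exists>S. S \<noteq> {} \<and> S \<noteq> UNIV \<and> (\<forall>i\<in>S. \<forall>j. j \<notin> S \<longrightarrow> C $ i $ j = 0)"
            by (rule exI[of _ ?T]) (intro conjI T1 T2 h)
          then show False using irr unfolding irreducible_mat_def by (rule notE[rotated])
        qed
        then obtain a b where ab: "a \<in> ?T" "b \<notin> ?T" "C $ a $ b \<noteq> 0"
          by blast
        then have "C $ a $ b > 0" using nnC[of a b] by linarith
        moreover have "b \<in> S (Suc t)" using ab eqS by auto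
        ultimately have "a \<in> S t" using cl by blast
        then show False using ab by auto
      qed
      have "card (S (Suc t)) < card (S t)"
        using sub ne by (intro psubset_card_mono) auto
      then show "card (S (Suc t)) + Suc t \<le> CARD('n) - 1" using ih by linarith
    qed
  qed
  show ?thesis
  proof (rule ccontr)
    assume "\<not> ?thesis"
    moreover have "s + CARD('n) - 1 = s + (CARD('n) - 1)" using n3 by simp
    ultimately have v: "vmax (x (s + (CARD('n) - 1))) = M"
      using le[of "CARD('n) - 1"] unfolding M_def by simp
    then have "card (S (CARD('n) - 1)) + (CARD('n) - 1) \<le> CARD('n) - 1" using key[of "CARD('n) - 1"] by blast
    then have "card (S (CARD('n) - 1)) = 0" by linarith
    then have "S (CARD('n) - 1) = {}" by simp
    moreover obtain i0 where "x (s + (CARD('n) - 1)) $ i0 = vmax (x (s + (CARD('n) - 1)))"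
      using vmax_in by blast
    ultimately show False using v unfolding S_def by auto
  qed
qed

end
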